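(* Let $V$ be a finite-dimensional vector space over a division ring, and let $k_1,k_2$ be integers with $1<k_1<\dim V-1$ and $k_1+k_2=\dim V$. Then $$\mathcal{H}_{k_1,k_2}(V)=\{(U_1,U_2)\in\mathrm{Sub}_{k_1}(V)\times\mathrm{Sub}_{k_2}(V): \dim(U_1\cap U_2)>0\}$$ is a non-degenerate, non-spiky hyperplane of the Segre product $\mathbf{P}_{k_1}(V)\otimes\mathbf{P}_{k_2}(V)$.
   Context: $\mathrm{Sub}_m(V)$ is the set of $m$-dimensional subspaces of $V$. The Grassmann space $\mathbf{P}_m(V)$ has points $\mathrm{Sub}_m(V)$ and lines the pencils $\{U\in\mathrm{Sub}_m(V):H\subseteq U\subseteq B\}$ for $H\in\mathrm{Sub}_{m-1}(V)$, $B\in\mathrm{Sub}_{m+1}(V)$, $H\subseteq B$. Segre product of two partial linear spaces $(S_1,\mathcal{L}_1),(S_2,\mathcal{L}_2)$: points $S_1\times S_2$, lines $l\times\{b\}$ and $\{a\}\times m$ with $l\in\mathcal{L}_1$, $m\in\mathcal{L}_2$. Points are collinear if on a common line. Subspace: any line meeting it in at least two points lies in it; hyperplane: proper subspace meeting every line; a set $X$ is spiky if every point of $X$ is collinear with some point outside $X$. For $\mathcal{H}\subseteq S_1\times S_2$ and $a=(a_1,a_2)$: $\mathcal{H}^{[a]}_1=\{x:(x,a_2)\in\mathcal{H}\}$, $\mathcal{H}^{[a]}_2=\{y:(a_1,y)\in\mathcal{H}\}$; a hyperplane $\mathcal{H}$ is non-degenerate if all these sets are hyperplanes of the respective factors.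 *)

theory Defs
  imports Main
begin

text \<open>The vector space V is the carrier UNIV of a type 'v (an additive abelian group)
with a scalar multiplication by a division ring 'k.\<close>

definition vs_axioms :: "('k::division_ring \<Rightarrow> 'v::ab_group_add \<Rightarrow> 'v) \<Rightarrow> bool" where
  "vs_axioms sm \<longleftrightarrow>
     (\<forall>a x y. sm a (x + y) = sm a x + sm a y) \<and>
     (\<forall>a b x. sm (a + b) x = sm a x + sm b x) \<and>
     (\<forall>a b x. sm (a * b) x = sm a (sm b x)) \<and>
     (\<forall>x. sm 1 x = x)"

definition vspan :: "('k::division_ring \<Rightarrow> 'v::ab_group_add \<Rightarrow> 'v) \<Rightarrow> 'v set \<Rightarrow> 'v set" where
  "vspan sm S = {(\<Sum>v\<in>T. sm (c v) v) | T c. finite T \<and> T \<subseteq> S}"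

definition vindependent :: "('k::division_ring \<Rightarrow> 'v::ab_group_add \<Rightarrow> 'v) \<Rightarrow> 'v set \<Rightarrow> bool" where
  "vindependent sm S \<longleftrightarrow>
     (\<forall>T c. finite T \<and> T \<subseteq> S \<and> (\<Sum>v\<in>T. sm (c v) v) = 0 \<longrightarrow> (\<forall>v\<in>T. c v = 0))"

definition vsubspace :: "('k::division_ring \<Rightarrow> 'v::ab_group_add \<Rightarrow> 'v) \<Rightarrow> 'v set \<Rightarrow> bool" where
  "vsubspace sm U \<longleftrightarrow> 0 \<in> U \<and> (\<forall>x\<in>U. \<forall>y\<in>U. x + y \<in> U) \<and> (\<forall>a. \<forall>x\<in>U. sm a x \<in> U)"

definition vbasis :: "('k::division_ring \<Rightarrow> 'v::ab_group_add \<Rightarrow> 'v) \<Rightarrow> 'v set \<Rightarrow> 'v set \<Rightarrow> bool" where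
  "vbasis sm U B \<longleftrightarrow> B \<subseteq> U \<and> vindependent sm B \<and> vspan sm B = U"

definition findim :: "('k::division_ring \<Rightarrow> 'v::ab_group_add \<Rightarrow> 'v) \<Rightarrow> bool" where
  "findim sm \<longleftrightarrow> (\<exists>B. finite B \<and> vspan sm B = UNIV)"

definition vdim :: "('k::division_ring \<Rightarrow> 'v::ab_group_add \<Rightarrow> 'v) \<Rightarrow> 'v set \<Rightarrow> nat" where
  "vdim sm U = card (SOME B. finite B \<and> vbasis sm U B)"

definition Sub :: "('k::division_ring \<Rightarrow> 'v::ab_group_add \<Rightarrow> 'v) \<Rightarrow> nat \<Rightarrow> 'v set set" where
  "Sub sm m = {U. vsubspace sm U \<and> vdim sm U = m}"

type_synonym 'p pls = "'p set \<times> 'p set set"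

definition grassmann :: "('k::division_ring \<Rightarrow> 'v::ab_group_add \<Rightarrow> 'v) \<Rightarrow> nat \<Rightarrow> 'v set pls" where
  "grassmann sm m = (Sub sm m,
     {{U \<in> Sub sm m. H \<subseteq> U \<and> U \<subseteq> B} | H B.
        H \<in> Sub sm (m - 1) \<and> B \<in> Sub sm (m + 1) \<and> H \<subseteq> B})"

definition segre :: "'a pls \<Rightarrow> 'b pls \<Rightarrow> ('a \<times> 'b) pls" where
  "segre P Q = (fst P \<times> fst Q,
     {l \<times> {b} | l b. l \<in> snd P \<and> b \<in> fst Q} \<union> {{a} \<times> m | a m. a \<in> fst P \<and> m \<in> snd Q})"

definition collinear_pts :: "'p pls \<Rightarrow> 'p \<Rightarrow> 'p \<Rightarrow> bool" where
  "collinear_pts P x y \<longleftrightarrow> (\<exists>l\<in>snd P. x \<in> l \<and> y \<in> l)"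

definition pls_subspace :: "'p pls \<Rightarrow> 'p set \<Rightarrow> bool" where
  "pls_subspace P X \<longleftrightarrow> X \<subseteq> fst P \<and>
     (\<forall>l\<in>snd P. (\<exists>x y. x \<noteq> y \<and> x \<in> l \<inter> X \<and> y \<in> l \<inter> X) \<longrightarrow> l \<subseteq> X)"

definition hyperplane :: "'p pls \<Rightarrow> 'p set \<Rightarrow> bool" where
  "hyperplane P X \<longleftrightarrow> pls_subspace P X \<and> X \<noteq> fst P \<and> (\<forall>l\<in>snd P. l \<inter> X \<noteq> {})"

definition spiky :: "'p pls \<Rightarrow> 'p set \<Rightarrow> bool" where
  "spiky P X \<longleftrightarrow> (\<forall>x\<in>X. \<exists>y\<in>fst P - X. collinear_pts P x y)"

definition slice1 :: "('a \<times> 'b) set \<Rightarrow> ('a \<times> 'b) \<Rightarrow> 'a set" where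
  "slice1 H a = {x. (x, snd a) \<in> H}"

definition slice2 :: "('a \<times> 'b) set \<Rightarrow> ('a \<times> 'b) \<Rightarrow> 'b set" where
  "slice2 H a = {y. (fst a, y) \<in> H}"

definition nondegenerate_hyperplane :: "'a pls \<Rightarrow> 'b pls \<Rightarrow> ('a \<times> 'b) set \<Rightarrow> bool" where
  "nondegenerate_hyperplane P Q H \<longleftrightarrow> hyperplane (segre P Q) H \<and>
     (\<forall>a \<in> fst P \<times> fst Q. hyperplane P (slice1 H a) \<and> hyperplane Q (slice2 H a))"

end

theory Submission
  imports Defs
begin


locale vs =
  fixes sm :: "'k::division_ring \<Rightarrow> 'v::ab_group_add \<Rightarrow> 'v"
  assumes ax: "vs_axioms sm"
begin

abbreviation "span \<equiv> vspan sm"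
abbreviation "indep \<equiv> vindependent sm"
abbreviation "subsp \<equiv> vsubspace sm"
abbreviation "dim \<equiv> vdim sm"

lemma sm_add_r: "sm a (x + y) = sm a x + sm a y" using ax unfolding vs_axioms_def by blast
lemma sm_add_l: "sm (a + b) x = sm a x + sm b x" using ax unfolding vs_axioms_def by blast
lemma sm_assoc: "sm (a * b) x = sm a (sm b x)" using ax unfolding vs_axioms_def by blast
lemma sm_one[simp]: "sm 1 x = x" using ax unfolding vs_axioms_def by blast

lemma sm_zero_l[simp]: "sm 0 x = 0"
  using sm_add_l[of 0 0 x] by simp
lemma sm_zero_r[simp]: "sm a 0 = 0"
  using sm_add_r[of a 0 0] by simp
lemma sm_minus_l: "sm (- a) x = - sm a x"
  using sm_add_l[of "-a" a x] by (simp add: eq_neg_iff_add_eq_0)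
lemma sm_minus_r: "sm a (- x) = - sm a x"
  using sm_add_r[of a "-x" x] by (simp add: eq_neg_iff_add_eq_0)
lemma sm_diff_r: "sm a (x - y) = sm a x - sm a y"
  using sm_add_r[of a x "-y"] sm_minus_r by simp
lemma sm_inv_cancel: "a \<noteq> 0 \<Longrightarrow> sm (inverse a) (sm a x) = x"
  by (simp flip: sm_assoc)
lemma sm_sum: "sm a (\<Sum>v\<in>T. f v) = (\<Sum>v\<in>T. sm a (f v))"
proof (cases "finite T")
  case True then show ?thesis by (induction T rule: finite_induct) (simp_all add: sm_add_r)
qed simp

lemma subsp_UNIV: "subsp UNIV" by (simp add: vsubspace_def)
lemma subsp_Int: "subsp U \<Longrightarrow> subsp W \<Longrightarrow> subsp (U \<inter> W)"
  by (simp add: vsubspace_def)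
lemma subsp_neg: "subsp U \<Longrightarrow> x \<in> U \<Longrightarrow> - x \<in> U"
  unfolding vsubspace_def using sm_minus_l[of 1 x] by (metis sm_one)
lemma subsp_add: "subsp U \<Longrightarrow> x \<in> U \<Longrightarrow> y \<in> U \<Longrightarrow> x + y \<in> U"
  unfolding vsubspace_def by blast
lemma subsp_diff: "subsp U \<Longrightarrow> x \<in> U \<Longrightarrow> y \<in> U \<Longrightarrow> x - y \<in> U"
  using subsp_add subsp_neg by (metis diff_conv_add_uminus)
lemma subsp_sm: "subsp U \<Longrightarrow> x \<in> U \<Longrightarrow> sm a x \<in> U"
  unfolding vsubspace_def by blast
lemma subsp_zero: "subsp U \<Longrightarrow> 0 \<in> U"
  unfolding vsubspace_def by blast
lemma subsp_sum: assumes "subsp U" "finite T" "T \<subseteq> U" shows "(\<Sum>v\<in>T. sm (c v) v) \<in> U"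
  using assms(2,3) proof (induction T rule: finite_induct)
  case empty then show ?case by (simp add: subsp_zero assms)
next
  case (insert x F) then show ?case by (simp add: subsp_add subsp_sm assms)
qed

lemma span_subsp: "subsp (span S)"
proof -
  have "0 \<in> span S" unfolding vspan_def by (rule CollectI, rule exI[of _ "{}"]) auto
  moreover have "x + y \<in> span S" if xs: "x \<in> span S" "y \<in> span S" for x y
  proof -
    obtain T1 c1 where 1: "x = (\<Sum>v\<in>T1. sm (c1 v) v)" "finite T1" "T1 \<subseteq> S"
      using xs(1) unfolding vspan_def by blast
    obtain T2 c2 where 2: "y = (\<Sum>v\<in>T2. sm (c2 v) v)" "finite T2" "T2 \<subseteq> S"
      using xs(2) unfolding vspan_def by blast
    let ?T = "T1 \<union> T2"
    let ?c = "\<lambda>v. (if v \<in> T1 then c1 v else 0) + (if v \<in> T2 then c2 v else 0)"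
    have "(\<Sum>v\<in>?T. sm (?c v) v) = (\<Sum>v\<in>?T. (if v \<in> T1 then sm (c1 v) v else 0))
          + (\<Sum>v\<in>?T. (if v \<in> T2 then sm (c2 v) v else 0))"
      by (subst sum.distrib[symmetric]) (rule sum.cong, simp_all add: sm_add_l)
    also have "\<dots> = x + y"
    proof -
      have f: "finite (T1 \<union> T2)" using 1 2 by simp
      have "(\<Sum>v\<in>?T. (if v \<in> T1 then sm (c1 v) v else 0)) = (\<Sum>v\<in>?T \<inter> T1. sm (c1 v) v)"
        by (rule sum.inter_restrict[OF f, symmetric])
      also have "?T \<inter> T1 = T1" by blast
      finally have e1: "(\<Sum>v\<in>?T. (if v \<in> T1 then sm (c1 v) v else 0)) = x" using 1(1) by simp
      have "(\<Sum>v\<in>?T. (if v \<in> T2 then sm (c2 v) v else 0)) = (\<Sum>v\<in>?T \<inter> T2. sm (c2 v) v)"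
        by (rule sum.inter_restrict[OF f, symmetric])
      also have "?T \<inter> T2 = T2" by blast
      finally have e2: "(\<Sum>v\<in>?T. (if v \<in> T2 then sm (c2 v) v else 0)) = y" using 2(1) by simp
      show ?thesis using e1 e2 by simp
    qed
    finally have eq: "x + y = (\<Sum>v\<in>?T. sm (?c v) v)" by simp
    show ?thesis unfolding vspan_def
      by (rule CollectI, rule exI[of _ ?T], rule exI[of _ ?c]) (use eq 1 2 in auto)
  qed
  moreover have "sm a x \<in> span S" if xs: "x \<in> span S" for a x
  proof -
    obtain T c where 1: "x = (\<Sum>v\<in>T. sm (c v) v)" "finite T" "T \<subseteq> S"
      using xs unfolding vspan_def by blast
    have "sm a x = (\<Sum>v\<in>T. sm (a * c v) v)" using 1 by (simp add: sm_sum sm_assoc)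
    then show ?thesis unfolding vspan_def
      by (rule_tac CollectI, rule_tac exI[of _ T], rule_tac exI[of _ "\<lambda>v. a * c v"]) (use 1 in auto)
  qed
  ultimately show ?thesis unfolding vsubspace_def by blast
qed

lemma span_sum_in: "finite T \<Longrightarrow> T \<subseteq> S \<Longrightarrow> (\<Sum>v\<in>T. sm (c v) v) \<in> span S"
  unfolding vspan_def by (rule CollectI, rule exI[of _ T], rule exI[of _ c]) simp

lemma span_sup: "S \<subseteq> span S"
proof
  fix x assume x: "x \<in> S"
  have "(\<Sum>v\<in>{x}. sm ((\<lambda>_. 1) v) v) \<in> span S" by (rule span_sum_in) (use x in auto)
  then show "x \<in> span S" by simp
qed

lemma span_mem: "x \<in> S \<Longrightarrow> x \<in> span S"
  using span_sup by (rule subsetD)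

lemma not_span_not_mem: "x \<notin> span S \<Longrightarrow> x \<notin> S"
  using span_mem by auto

lemma span_min: assumes "S \<subseteq> U" "subsp U" shows "span S \<subseteq> U"
proof
  fix x assume "x \<in> span S"
  then obtain T c where "x = (\<Sum>v\<in>T. sm (c v) v)" "finite T" "T \<subseteq> S" unfolding vspan_def by blast
  then show "x \<in> U" using subsp_sum[OF assms(2), of T c] assms(1) by auto
qed

lemma span_mono: "S \<subseteq> T \<Longrightarrow> span S \<subseteq> span T"
  by (rule span_min) (use span_sup span_subsp in blast)+

lemma span_of_subsp: "subsp U \<Longrightarrow> span U = U"
  by (rule subset_antisym) (simp_all add: span_min span_sup)

lemma span_empty: "span {} = {0}"
proof -
  have "span {} \<subseteq> {0}" by (rule span_min) (simp_all add: vsubspace_def)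
  moreover have "0 \<in> span {}" using span_subsp subsp_zero by blast
  ultimately show ?thesis by blast
qed

lemma span_insert_D: "x \<in> span (insert t A) \<Longrightarrow> \<exists>a. x - sm a t \<in> span A"
proof -
  assume "x \<in> span (insert t A)"
  then obtain T c where 1: "x = (\<Sum>v\<in>T. sm (c v) v)" "finite T" "T \<subseteq> insert t A"
    unfolding vspan_def by blast
  show ?thesis
  proof (cases "t \<in> T")
    case True
    then have "x = sm (c t) t + (\<Sum>v\<in>T-{t}. sm (c v) v)" using 1 by (simp add: sum.remove)
    then have "x - sm (c t) t = (\<Sum>v\<in>T-{t}. sm (c v) v)" by simp
    moreover have "(\<Sum>v\<in>T-{t}. sm (c v) v) \<in> span A" using 1 by (intro span_sum_in) auto
    ultimately show ?thesis by metis
  next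
    case False
    then have "x - sm 0 t \<in> span A" using 1 span_sum_in[of T A c] by auto
    then show ?thesis by blast
  qed
qed

lemma span_insert_I: "x - sm a t \<in> span A \<Longrightarrow> x \<in> span (insert t A)"
proof -
  assume h: "x - sm a t \<in> span A"
  have "span A \<subseteq> span (insert t A)" by (rule span_mono) auto
  moreover have "t \<in> span (insert t A)" by (rule span_mem) simp
  ultimately have "(x - sm a t) + sm a t \<in> span (insert t A)"
    using h span_subsp subsp_add subsp_sm by (metis subsetD)
  then show ?thesis by simp
qed

lemma exchange1: "s \<in> span (insert t A) \<Longrightarrow> s \<notin> span A \<Longrightarrow> t \<in> span (insert s A)"
proof -
  assume h1: "s \<in> span (insert t A)" and h2: "s \<notin> span A"
  obtain a where a: "s - sm a t \<in> span A" using span_insert_D[OF h1] by blast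
  have a0: "a \<noteq> 0" using a h2 by auto
  have "t - sm (inverse a) s = - sm (inverse a) (s - sm a t)"
    using a0 by (simp add: sm_diff_r sm_inv_cancel)
  also have "\<dots> \<in> span A" using a span_subsp subsp_neg subsp_sm by blast
  finally show ?thesis by (rule span_insert_I)
qed

lemma span_union_D: "v \<in> span (A \<union> B) \<Longrightarrow> \<exists>a\<in>span A. \<exists>b\<in>span B. v = a + b"
proof -
  assume "v \<in> span (A \<union> B)"
  then obtain T c where 1: "v = (\<Sum>v\<in>T. sm (c v) v)" "finite T" "T \<subseteq> A \<union> B"
    unfolding vspan_def by blast
  have "v = (\<Sum>v\<in>T \<inter> A. sm (c v) v) + (\<Sum>v\<in>T - A. sm (c v) v)"
    using 1 by (simp add: sum.Int_Diff)
  moreover have "(\<Sum>v\<in>T \<inter> A. sm (c v) v) \<in> span A" using 1 by (intro span_sum_in) auto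
  moreover have "(\<Sum>v\<in>T - A. sm (c v) v) \<in> span B" using 1 by (intro span_sum_in) auto
  ultimately show ?thesis by blast
qed

end



context vs begin

lemma indep_subset: "indep S \<Longrightarrow> T \<subseteq> S \<Longrightarrow> indep T"
  unfolding vindependent_def by (meson order_trans)

lemma indep_empty: "indep {}" unfolding vindependent_def by auto

lemma indep_not_in_span: assumes "indep S" "x \<in> S" shows "x \<notin> span (S - {x})"
proof
  assume "x \<in> span (S - {x})"
  then obtain T c where T: "x = (\<Sum>v\<in>T. sm (c v) v)" "finite T" "T \<subseteq> S - {x}"
    unfolding vspan_def by blast
  define c' where "c' = c(x := -1)"
  have xT: "x \<notin> T" using T by auto
  have "(\<Sum>v\<in>insert x T. sm (c' v) v) = sm (c' x) x + (\<Sum>v\<in>T. sm (c' v) v)"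
    using T xT by (simp add: sum.insert)
  also have "(\<Sum>v\<in>T. sm (c' v) v) = (\<Sum>v\<in>T. sm (c v) v)"
    by (rule sum.cong) (use xT c'_def in auto)
  finally have "(\<Sum>v\<in>insert x T. sm (c' v) v) = 0" using T(1) by (simp add: c'_def sm_minus_l)
  moreover have "finite (insert x T)" "insert x T \<subseteq> S" using T assms(2) by auto
  ultimately have "\<forall>v\<in>insert x T. c' v = 0"
    using assms(1) unfolding vindependent_def by blast
  then show False by (simp add: c'_def)
qed

lemma indep_insert: assumes "indep S" "x \<notin> span S" shows "indep (insert x S)"
  unfolding vindependent_def
proof (intro allI impI)
  fix T c assume h: "finite T \<and> T \<subseteq> insert x S \<and> (\<Sum>v\<in>T. sm (c v) v) = 0"
  have cx: "c x = 0" if xT: "x \<in> T"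
  proof (rule ccontr)
    assume nz: "c x \<noteq> 0"
    have "(\<Sum>v\<in>T. sm (c v) v) = sm (c x) x + (\<Sum>v\<in>T-{x}. sm (c v) v)" using h xT by (intro sum.remove) auto
    then have "0 = sm (c x) x + (\<Sum>v\<in>T-{x}. sm (c v) v)" using h by simp
    then have "sm (c x) x = - (\<Sum>v\<in>T-{x}. sm (c v) v)" by (simp add: eq_neg_iff_add_eq_0)
    then have "x = sm (inverse (c x)) (- (\<Sum>v\<in>T-{x}. sm (c v) v))"
      using sm_inv_cancel[OF nz, of x] by simp
    moreover have "(\<Sum>v\<in>T-{x}. sm (c v) v) \<in> span S" using h by (intro span_sum_in) auto
    then have "sm (inverse (c x)) (- (\<Sum>v\<in>T-{x}. sm (c v) v)) \<in> span S"
      using span_subsp subsp_neg subsp_sm by blast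
    ultimately show False using assms(2) by simp
  qed
  have s0: "(\<Sum>v\<in>T-{x}. sm (c v) v) = 0"
  proof (cases "x \<in> T")
    case True
    then have "(\<Sum>v\<in>T. sm (c v) v) = sm (c x) x + (\<Sum>v\<in>T-{x}. sm (c v) v)" using h by (intro sum.remove) auto
    then have "0 = sm (c x) x + (\<Sum>v\<in>T-{x}. sm (c v) v)" using h by simp
    then show ?thesis using cx[OF True] by simp
  next
    case False then show ?thesis using h by simp
  qed
  have "finite (T - {x})" "T - {x} \<subseteq> S" using h by auto
  then have "\<forall>v\<in>T-{x}. c v = 0" using assms(1) s0 unfolding vindependent_def by blast
  then show "\<forall>v\<in>T. c v = 0" using cx by auto
qed

lemma exch_base: assumes "T \<subseteq> S" "finite T" "indep S" "S \<subseteq> span T" shows "finite S \<and> card S \<le> card T"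
proof -
  have "S \<subseteq> T"
  proof
    fix x assume xS: "x \<in> S"
    show "x \<in> T"
    proof (rule ccontr)
      assume "x \<notin> T"
      then have "T \<subseteq> S - {x}" using assms(1) by blast
      then have "span T \<subseteq> span (S - {x})" by (rule span_mono)
      then show False using xS assms indep_not_in_span by blast
    qed
  qed
  then have "S = T" using assms(1) by blast
  then show ?thesis using assms(2) by simp
qed

lemma exch_aux: "card (T - S) \<le> n \<Longrightarrow> finite T \<Longrightarrow> indep S \<Longrightarrow> S \<subseteq> span T \<Longrightarrow> finite S \<and> card S \<le> card T"
proof (induction n arbitrary: T)
  case 0
  then have "T \<subseteq> S" by auto
  then show ?case using exch_base 0 by blast
next
  case (Suc n T)
  show ?case
  proof (cases "T \<subseteq> S")
    case True
    then show ?thesis using exch_base Suc.prems by blast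
  next
    case False
    then obtain t where t: "t \<in> T" "t \<notin> S" by blast
    show ?thesis
    proof (cases "S \<subseteq> span (T - {t})")
      case True
      have "card ((T - {t}) - S) < card (T - S)"
        using Suc.prems(2) t by (intro psubset_card_mono) auto
      then have "card ((T - {t}) - S) \<le> n" using Suc.prems(1) by linarith
      then have "finite S \<and> card S \<le> card (T - {t})" using Suc.IH[of "T - {t}"] Suc.prems True by auto
      moreover have "card (T - {t}) \<le> card T" using Suc.prems(2) by (intro card_mono) auto
      ultimately show ?thesis by linarith
    next
      case False
      then obtain s where s: "s \<in> S" "s \<notin> span (T - {t})" by blast
      define T' where "T' = insert s (T - {t})"
      have sT: "s \<notin> T - {t}" using s(2) by (rule not_span_not_mem)
      have "insert t (T - {t}) = T" using t by blast
      then have "s \<in> span (insert t (T - {t}))" using s Suc.prems(4) by auto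
      then have "t \<in> span T'" unfolding T'_def using exchange1 s(2) by blast
      moreover have "T - {t} \<subseteq> span T'" using span_sup[of T'] unfolding T'_def by (meson order_trans subset_insertI)
      ultimately have "T \<subseteq> span T'" by blast
      then have "span T \<subseteq> span T'" using span_min span_subsp by blast
      then have ST': "S \<subseteq> span T'" using Suc.prems(4) by blast
      have "T' - S = (T - S) - {t}" using s(1) unfolding T'_def by blast
      moreover have "card ((T - S) - {t}) < card (T - S)"
        using Suc.prems(2) t by (intro psubset_card_mono) auto
      ultimately have "card (T' - S) \<le> n" using Suc.prems(1) by simp
      moreover have "finite T'" using Suc.prems(2) unfolding T'_def by simp
      ultimately have "finite S \<and> card S \<le> card T'" using Suc.IH[of T'] Suc.prems ST' by auto
      moreover have "card T' = card T"
      proof -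
        have "card T' = Suc (card (T - {t}))" unfolding T'_def using sT Suc.prems(2) by simp
        also have "\<dots> = card T" using card.remove[OF Suc.prems(2) t(1)] by (rule sym)
        finally show ?thesis .
      qed
      ultimately show ?thesis by simp
    qed
  qed
qed

lemma exch: "finite T \<Longrightarrow> indep S \<Longrightarrow> S \<subseteq> span T \<Longrightarrow> finite S \<and> card S \<le> card T"
  using exch_aux[OF order_refl] by blast

lemma indep_single: "x \<noteq> 0 \<Longrightarrow> indep {x}"
  using indep_insert[OF indep_empty, of x] span_empty by simp

end

locale fdvs = vs +
  assumes fd: "findim sm"
begin

lemma indep_bound: "\<exists>N. \<forall>S. indep S \<longrightarrow> finite S \<and> card S \<le> N"
proof -
  have "\<exists>B. finite B \<and> span B = UNIV" using fd by (simp only: findim_def)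
  then obtain B0 where B0': "finite B0 \<and> span B0 = UNIV" ..
  have B0: "finite B0" "span B0 = UNIV" using B0' by simp_all
  have "\<forall>S. indep S \<longrightarrow> finite S \<and> card S \<le> card B0"
  proof (intro allI impI)
    fix S assume iS: "indep S"
    have "S \<subseteq> span B0" using B0(2) by blast
    then show "finite S \<and> card S \<le> card B0" by (rule exch[OF B0(1) iS])
  qed
  then show ?thesis by (rule exI)
qed

lemma extend: assumes "subsp U" "indep S" "S \<subseteq> U" shows "\<exists>B. S \<subseteq> B \<and> finite B \<and> vbasis sm U B"
proof -
  obtain N where N: "\<forall>S. indep S \<longrightarrow> finite S \<and> card S \<le> N" using indep_bound by blast
  define P where "P = (\<lambda>B. S \<subseteq> B \<and> B \<subseteq> U \<and> indep B)"
  have "P S" using assms unfolding P_def by simp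
  moreover have "\<forall>B. P B \<longrightarrow> card B < N + 1" using N unfolding P_def by (simp add: less_Suc_eq_le)
  ultimately obtain B where B: "P B" "\<forall>B'. P B' \<longrightarrow> card B' \<le> card B"
    using ex_has_greatest_nat[of P S card "N+1"] by blast
  have B1: "S \<subseteq> B" "B \<subseteq> U" "indep B" using B(1) unfolding P_def by auto
  have fB: "finite B" using N B1(3) by blast
  have "span B \<subseteq> U" using span_min B1(2) assms(1) by blast
  moreover have "U \<subseteq> span B"
  proof
    fix x assume xU: "x \<in> U"
    show "x \<in> span B"
    proof (rule ccontr)
      assume nx: "x \<notin> span B"
      have "indep (insert x B)" using indep_insert[OF B1(3) nx] .
      then have "P (insert x B)" using B1 xU unfolding P_def by auto
      then have "card (insert x B) \<le> card B" using B(2) by blast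
      moreover have "x \<notin> B" using nx by (rule not_span_not_mem)
      ultimately show False using fB by simp
    qed
  qed
  ultimately have "span B = U" by blast
  then show ?thesis unfolding vbasis_def using B1 fB by blast
qed

lemma dim_basis: assumes "vbasis sm U B" "finite B" shows "dim U = card B"
proof -
  have "\<exists>B. finite B \<and> vbasis sm U B" using assms by blast
  then have h: "finite (SOME B. finite B \<and> vbasis sm U B) \<and> vbasis sm U (SOME B. finite B \<and> vbasis sm U B)"
    by (rule someI_ex)
  define B' where "B' = (SOME B. finite B \<and> vbasis sm U B)"
  have h': "finite B'" "B' \<subseteq> U" "indep B'" "span B' = U" using h unfolding B'_def vbasis_def by auto
  have a: "B \<subseteq> U" "indep B" "span B = U" using assms(1) unfolding vbasis_def by auto
  have "card B' \<le> card B" using exch[OF assms(2) h'(3)] a(3) h'(2) by simp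
  moreover have "card B \<le> card B'" using exch[OF h'(1) a(2)] a(1) h'(4) by simp
  ultimately have "card B' = card B" by simp
  then show ?thesis unfolding vdim_def B'_def[symmetric] .
qed

lemma basis_ex: "subsp U \<Longrightarrow> \<exists>B. finite B \<and> vbasis sm U B"
  using extend[of U "{}"] indep_empty by blast

lemma dim_span: "indep S \<Longrightarrow> finite S \<Longrightarrow> dim (span S) = card S"
  by (rule dim_basis) (simp_all add: vbasis_def span_sup)

lemma dim_indep_le: assumes "subsp U" "indep S" "S \<subseteq> U" shows "finite S \<and> card S \<le> dim U"
proof -
  obtain B where B: "S \<subseteq> B" "finite B" "vbasis sm U B" using extend[OF assms] by blast
  have "dim U = card B" by (rule dim_basis[OF B(3) B(2)])
  moreover have "finite S" using B(1,2) by (rule finite_subset)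
  moreover have "card S \<le> card B" using B(1,2) by (rule card_mono[rotated])
  ultimately show ?thesis by simp
qed

lemma dim_indep_eq: assumes "subsp U" "indep S" "S \<subseteq> U" "card S = dim U" shows "span S = U"
proof -
  obtain B where B: "S \<subseteq> B" "finite B" "vbasis sm U B" using extend[OF assms(1-3)] by blast
  have "card B = card S" using dim_basis[OF B(3) B(2)] assms(4) by simp
  then have "S = B" using card_subset_eq[OF B(2) B(1)] by simp
  then show ?thesis using B(3) unfolding vbasis_def by simp
qed

lemma dim_mono: assumes "subsp X" "subsp Y" "X \<subseteq> Y" shows "dim X \<le> dim Y"
proof -
  obtain B where B: "finite B" "vbasis sm X B" using basis_ex[OF assms(1)] by blast
  have "B \<subseteq> Y" "indep B" using B(2) assms(3) unfolding vbasis_def by auto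
  then have "card B \<le> dim Y" using dim_indep_le[OF assms(2)] by simp
  then show ?thesis using dim_basis[OF B(2) B(1)] by simp
qed

lemma dim_eq_eq: assumes "subsp X" "subsp Y" "X \<subseteq> Y" "dim X = dim Y" shows "X = Y"
proof -
  obtain B where B: "finite B" "vbasis sm X B" using basis_ex[OF assms(1)] by blast
  have B2: "B \<subseteq> Y" "indep B" "span B = X" using B(2) assms(3) unfolding vbasis_def by auto
  have "card B = dim Y" using dim_basis[OF B(2) B(1)] assms(4) by simp
  then have "span B = Y" using dim_indep_eq[OF assms(2) B2(2) B2(1)] by simp
  then show ?thesis using B2(3) by simp
qed

lemma dim_zero: assumes "subsp X" shows "dim X = 0 \<longleftrightarrow> X = {0}"
proof
  assume d: "dim X = 0"
  obtain B where B: "finite B" "vbasis sm X B" using basis_ex[OF assms] by blast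
  then have "card B = 0" using dim_basis[OF B(2) B(1)] d by simp
  then have "B = {}" using B(1) by simp
  then show "X = {0}" using B(2) span_empty unfolding vbasis_def by simp
next
  assume "X = {0}"
  then have "vbasis sm X {}" unfolding vbasis_def using span_empty indep_empty by simp
  then show "dim X = 0" using dim_basis[of X "{}"] by simp
qed

lemma dim_pos: assumes "subsp X" shows "0 < dim X \<longleftrightarrow> (\<exists>x\<in>X. x \<noteq> 0)"
proof -
  have "0 \<in> X" using assms by (rule subsp_zero)
  then have "X = {0} \<longleftrightarrow> \<not> (\<exists>x\<in>X. x \<noteq> 0)" by blast
  then show ?thesis using dim_zero[OF assms] by auto
qed

lemma dim_lt: assumes "subsp X" "subsp Y" "X \<subseteq> Y" "X \<noteq> Y" shows "dim X < dim Y"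
proof -
  have "dim X \<le> dim Y" using dim_mono[OF assms(1-3)] .
  moreover have "dim X \<noteq> dim Y" using dim_eq_eq[OF assms(1-3)] assms(4) by blast
  ultimately show ?thesis by simp
qed

end



context fdvs begin

lemma span_disjoint_zero:
  assumes "indep B" "C \<subseteq> B" "D \<subseteq> B" "C \<inter> D = {}" "x \<in> span C" "x \<in> span D"
  shows "x = 0"
proof -
  obtain T1 c1 where T1: "x = (\<Sum>v\<in>T1. sm (c1 v) v)" "finite T1" "T1 \<subseteq> C"
    using assms(5) unfolding vspan_def by blast
  obtain T2 c2 where T2: "x = (\<Sum>v\<in>T2. sm (c2 v) v)" "finite T2" "T2 \<subseteq> D"
    using assms(6) unfolding vspan_def by blast
  define c where "c = (\<lambda>v. if v \<in> T1 then c1 v else - c2 v)"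
  have dj: "T1 \<inter> T2 = {}" using T1(3) T2(3) assms(4) by blast
  have "(\<Sum>v\<in>T1 \<union> T2. sm (c v) v) = (\<Sum>v\<in>T1. sm (c v) v) + (\<Sum>v\<in>T2. sm (c v) v)"
    using T1(2) T2(2) dj by (rule sum.union_disjoint)
  also have "(\<Sum>v\<in>T1. sm (c v) v) = x" unfolding T1(1) by (rule sum.cong) (simp_all add: c_def)
  also have "(\<Sum>v\<in>T2. sm (c v) v) = (\<Sum>v\<in>T2. - sm (c2 v) v)"
    by (rule sum.cong) (use dj in \<open>auto simp: c_def sm_minus_l\<close>)
  also have "\<dots> = - x" unfolding T2(1) by (simp add: sum_negf)
  finally have z: "(\<Sum>v\<in>T1 \<union> T2. sm (c v) v) = 0" by simp
  have "finite (T1 \<union> T2)" "T1 \<union> T2 \<subseteq> B" using T1 T2 assms(2,3) by auto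
  then have "\<forall>v\<in>T1 \<union> T2. c v = 0" using assms(1) z unfolding vindependent_def by blast
  note all = this
  have "\<forall>v\<in>T2. c2 v = 0"
  proof
    fix v assume v: "v \<in> T2"
    then have "v \<notin> T1" using dj by blast
    moreover have "c v = 0" using all v by blast
    ultimately show "c2 v = 0" unfolding c_def by simp
  qed
  then show ?thesis unfolding T2(1) by simp
qed

lemma grassmann_ineq:
  assumes sX: "subsp X" and sY: "subsp Y" and sZ: "subsp Z" and XZ: "X \<subseteq> Z" and YZ: "Y \<subseteq> Z"
  shows "dim X + dim Y \<le> dim Z + dim (X \<inter> Y)"
proof -
  have sXY: "subsp (X \<inter> Y)" using sX sY by (rule subsp_Int)
  obtain C where C: "finite C" "vbasis sm (X \<inter> Y) C" using basis_ex[OF sXY] by blast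
  have C2: "C \<subseteq> X \<inter> Y" "indep C" "span C = X \<inter> Y" using C(2) unfolding vbasis_def by auto
  have "C \<subseteq> Y" using C2(1) by blast
  then obtain BY where BY: "C \<subseteq> BY" "finite BY" "vbasis sm Y BY" using extend[OF sY C2(2)] by blast
  have BY2: "BY \<subseteq> Y" "indep BY" "span BY = Y" using BY(3) unfolding vbasis_def by auto
  obtain BX where BX: "finite BX" "vbasis sm X BX" using basis_ex[OF sX] by blast
  have BX2: "BX \<subseteq> X" "indep BX" "span BX = X" using BX(2) unfolding vbasis_def by auto
  define E where "E = BY - C"
  have fE: "finite E" unfolding E_def using BY(2) by simp
  have noC: False if "e \<in> E" "F \<subseteq> E" "e \<notin> F" "e \<in> span (C \<union> F)" for e F
  proof -
    have "C \<union> F \<subseteq> BY - {e}" using that BY(1) unfolding E_def by blast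
    then have "span (C \<union> F) \<subseteq> span (BY - {e})" by (rule span_mono)
    moreover have "e \<in> BY" using that(1) unfolding E_def by blast
    ultimately show False using indep_not_in_span[OF BY2(2)] that(4) by blast
  qed
  have key: "finite E' \<Longrightarrow> E' \<subseteq> E \<Longrightarrow> indep (BX \<union> E')" for E'
  proof (induction E' rule: finite_subset_induct')
    case empty then show ?case using BX2(2) by simp
  next
    case (insert e F)
    have "e \<notin> span (BX \<union> F)"
    proof
      assume "e \<in> span (BX \<union> F)"
      then obtain a b where ab: "a \<in> span BX" "b \<in> span F" "e = a + b" using span_union_D by blast
      have FE: "F \<subseteq> E" using insert.hyps(3) .
      have "F \<subseteq> BY" using FE unfolding E_def by blast
      then have "span F \<subseteq> Y" using span_mono BY2(3) by blast
      then have bY: "b \<in> Y" using ab(2) by blast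
      have eY: "e \<in> Y" using insert.hyps(2) BY2(1) unfolding E_def by blast
      have "a = e - b" using ab(3) by simp
      then have "a \<in> Y" using subsp_diff[OF sY eY bY] by simp
      moreover have "a \<in> X" using ab(1) BX2(3) by simp
      ultimately have "a \<in> span C" using C2(3) by simp
      moreover have "span C \<subseteq> span (C \<union> F)" by (rule span_mono) simp
      moreover have "span F \<subseteq> span (C \<union> F)" by (rule span_mono) simp
      ultimately have "e \<in> span (C \<union> F)" using ab span_subsp[of "C \<union> F"] subsp_add by blast
      then show False using noC[OF insert.hyps(2) FE insert.hyps(4)] by blast
    qed
    then have "indep (insert e (BX \<union> F))" using indep_insert insert.IH by blast
    then show ?case by simp
  qed
  have iXE: "indep (BX \<union> E)" using key[OF fE] by simp
  have dj: "BX \<inter> E = {}"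
  proof (rule ccontr)
    assume "BX \<inter> E \<noteq> {}"
    then obtain e where e: "e \<in> BX" "e \<in> E" by blast
    have "e \<in> X" using e(1) BX2(1) by blast
    moreover have "e \<in> Y" using e(2) BY2(1) unfolding E_def by blast
    ultimately have "e \<in> span C" using C2(3) by simp
    moreover have "span C \<subseteq> span (C \<union> {})" by simp
    ultimately show False using noC[OF e(2), of "{}"] by simp
  qed
  have "BX \<union> E \<subseteq> Z" using BX2(1) BY2(1) XZ YZ unfolding E_def by blast
  then have "card (BX \<union> E) \<le> dim Z" using dim_indep_le[OF sZ iXE] by simp
  moreover have "card (BX \<union> E) = card BX + card E" using BX(1) fE dj by (rule card_Un_disjoint)
  moreover have "card E = card BY - card C" unfolding E_def using card_Diff_subset[OF C(1) BY(1)] .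
  moreover have "card C \<le> card BY" using BY(1,2) by (rule card_mono[rotated])
  moreover have "dim X = card BX" by (rule dim_basis[OF BX(2) BX(1)])
  moreover have "dim Y = card BY" by (rule dim_basis[OF BY(3) BY(2)])
  moreover have "dim (X \<inter> Y) = card C" by (rule dim_basis[OF C(2) C(1)])
  ultimately show ?thesis by linarith
qed

end



context fdvs begin

lemma complement:
  assumes sA: "subsp A" and d: "dim A + m = dim UNIV"
  shows "\<exists>U. subsp U \<and> dim U = m \<and> U \<inter> A = {0}"
proof -
  obtain C where C: "finite C" "vbasis sm A C" using basis_ex[OF sA] by blast
  have C2: "C \<subseteq> A" "indep C" "span C = A" using C(2) unfolding vbasis_def by auto
  obtain B where B: "C \<subseteq> B" "finite B" "vbasis sm UNIV B" using extend[OF subsp_UNIV C2(2)] by blast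
  have B2: "indep B" using B(3) unfolding vbasis_def by auto
  define D where "D = B - C"
  have iD: "indep D" using indep_subset[OF B2] unfolding D_def by blast
  have fD: "finite D" unfolding D_def using B(2) by simp
  have "card D = card B - card C" unfolding D_def using card_Diff_subset[OF C(1) B(1)] .
  moreover have "dim UNIV = card B" by (rule dim_basis[OF B(3) B(2)])
  moreover have "dim A = card C" by (rule dim_basis[OF C(2) C(1)])
  ultimately have cD: "card D = m" using d by simp
  have "span D \<inter> A = {0}"
  proof
    show "span D \<inter> A \<subseteq> {0}"
    proof
      fix x assume x: "x \<in> span D \<inter> A"
      have "x = 0"
        by (rule span_disjoint_zero[OF B2 B(1), of D]) (use x C2(3) in \<open>auto simp: D_def\<close>)
      then show "x \<in> {0}" by simp
    qed
    show "{0} \<subseteq> span D \<inter> A" using subsp_zero[OF sA] subsp_zero[OF span_subsp[of D]] by simp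
  qed
  moreover have "dim (span D) = m" using dim_span[OF iD fD] cD by simp
  ultimately show ?thesis using span_subsp[of D] by blast
qed

lemma pencil:
  assumes sH: "subsp H" and sB: "subsp B" and HB: "H \<subseteq> B" and v: "v \<in> B" "v \<notin> H"
    and dH: "dim H + 1 = m"
  shows "\<exists>U. subsp U \<and> dim U = m \<and> H \<subseteq> U \<and> U \<subseteq> B \<and> v \<in> U"
proof -
  obtain C where C: "finite C" "vbasis sm H C" using basis_ex[OF sH] by blast
  have C2: "C \<subseteq> H" "indep C" "span C = H" using C(2) unfolding vbasis_def by auto
  have vC: "v \<notin> span C" using v(2) C2(3) by simp
  have iS: "indep (insert v C)" by (rule indep_insert[OF C2(2) vC])
  have "v \<notin> C" using v(2) C2(1) by blast
  then have "card (insert v C) = m" using C(1) dim_basis[OF C(2) C(1)] dH by simp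
  then have "dim (span (insert v C)) = m" using dim_span[OF iS] C(1) by simp
  moreover have "H \<subseteq> span (insert v C)" using span_mono[of C "insert v C"] C2(3) by blast
  moreover have "span (insert v C) \<subseteq> B" by (rule span_min) (use C2(1) HB v(1) sB in auto)
  moreover have "v \<in> span (insert v C)" by (rule span_mem) simp
  ultimately show ?thesis using span_subsp[of "insert v C"] by blast
qed

lemma line_meets:
  assumes sA: "subsp A" and d: "dim A + m = dim UNIV" and m1: "1 \<le> m"
    and H: "H \<in> Sub sm (m - 1)" and B: "B \<in> Sub sm (m + 1)" and HB: "H \<subseteq> B"
  shows "\<exists>U. U \<in> Sub sm m \<and> H \<subseteq> U \<and> U \<subseteq> B \<and> 0 < dim (U \<inter> A)"
proof -
  have sH: "subsp H" and dH: "dim H = m - 1" using H unfolding Sub_def by auto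
  have sB: "subsp B" and dB: "dim B = m + 1" using B unfolding Sub_def by auto
  have "dim B + dim A \<le> dim UNIV + dim (B \<inter> A)"
    by (rule grassmann_ineq[OF sB sA subsp_UNIV]) auto
  then have "0 < dim (B \<inter> A)" using d dB by simp
  then obtain w where w: "w \<in> B \<inter> A" "w \<noteq> 0" using dim_pos[OF subsp_Int[OF sB sA]] by blast
  have dH1: "dim H + 1 = m" using dH m1 by simp
  show ?thesis
  proof (cases "w \<in> H")
    case True
    have "H \<noteq> B" using dH dB m1 by auto
    then obtain v where v: "v \<in> B" "v \<notin> H" using HB by blast
    obtain U where U: "subsp U" "dim U = m" "H \<subseteq> U" "U \<subseteq> B" using pencil[OF sH sB HB v dH1] by blast
    have "w \<in> U \<inter> A" using True U(3) w(1) by blast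
    then have "0 < dim (U \<inter> A)" using dim_pos[OF subsp_Int[OF U(1) sA]] w(2) by blast
    then show ?thesis using U unfolding Sub_def by blast
  next
    case False
    have wB: "w \<in> B" using w(1) by blast
    obtain U where U: "subsp U" "dim U = m" "H \<subseteq> U" "U \<subseteq> B" "w \<in> U"
      using pencil[OF sH sB HB wB False dH1] by blast
    have "w \<in> U \<inter> A" using U(5) w(1) by blast
    then have "0 < dim (U \<inter> A)" using dim_pos[OF subsp_Int[OF U(1) sA]] w(2) by blast
    then show ?thesis using U unfolding Sub_def by blast
  qed
qed

lemma line_sub:
  assumes sA: "subsp A" and m1: "1 \<le> m"
    and H: "H \<in> Sub sm (m - 1)" and B: "B \<in> Sub sm (m + 1)"
    and x: "x \<in> Sub sm m" "H \<subseteq> x" "x \<subseteq> B" "0 < dim (x \<inter> A)"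
    and y: "y \<in> Sub sm m" "H \<subseteq> y" "y \<subseteq> B" "0 < dim (y \<inter> A)"
    and xy: "x \<noteq> y"
    and U: "U \<in> Sub sm m" "H \<subseteq> U" "U \<subseteq> B"
  shows "0 < dim (U \<inter> A)"
proof -
  have sH: "subsp H" and dH: "dim H = m - 1" using H unfolding Sub_def by auto
  have sB: "subsp B" and dB: "dim B = m + 1" using B unfolding Sub_def by auto
  have sx: "subsp x" and dx: "dim x = m" using x(1) unfolding Sub_def by auto
  have sy: "subsp y" and dy: "dim y = m" using y(1) unfolding Sub_def by auto
  have sU: "subsp U" and dU: "dim U = m" using U(1) unfolding Sub_def by auto
  show ?thesis
  proof (cases "0 < dim (H \<inter> A)")
    case True
    have "dim (H \<inter> A) \<le> dim (U \<inter> A)"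
      by (rule dim_mono[OF subsp_Int[OF sH sA] subsp_Int[OF sU sA]]) (use U(2) in blast)
    then show ?thesis using True by simp
  next
    case False
    then have HA: "H \<inter> A = {0}" using dim_zero[OF subsp_Int[OF sH sA]] by simp
    obtain w where w: "w \<in> x \<inter> A" "w \<noteq> 0" using dim_pos[OF subsp_Int[OF sx sA]] x(4) by blast
    obtain w' where w': "w' \<in> y \<inter> A" "w' \<noteq> 0" using dim_pos[OF subsp_Int[OF sy sA]] y(4) by blast
    have sxy: "subsp (x \<inter> y)" using sx sy by (rule subsp_Int)
    have xyH: "x \<inter> y = H"
    proof -
      have "x \<inter> y \<noteq> x"
      proof
        assume "x \<inter> y = x"
        then have "x \<subseteq> y" by blast
        then have "x = y" using dim_eq_eq[OF sx sy] dx dy by simp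
        then show False using xy by simp
      qed
      then have "dim (x \<inter> y) < m" using dim_lt[OF sxy sx] dx by blast
      moreover have "dim H \<le> dim (x \<inter> y)" by (rule dim_mono[OF sH sxy]) (use x(2) y(2) in blast)
      ultimately have "dim H = dim (x \<inter> y)" using dH m1 by simp
      moreover have "H \<subseteq> x \<inter> y" using x(2) y(2) by blast
      ultimately have "H = x \<inter> y" using dim_eq_eq[OF sH sxy] by blast
      then show ?thesis by simp
    qed
    define W where "W = B \<inter> A"
    have sW: "subsp W" unfolding W_def using sB sA by (rule subsp_Int)
    have wW: "w \<in> W" using w(1) x(3) unfolding W_def by blast
    have w'W: "w' \<in> W" using w'(1) y(3) unfolding W_def by blast
    have iw: "indep {w}" using indep_single[OF w(2)] .
    have "card {w} \<le> dim W" using dim_indep_le[OF sW iw] wW by simp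
    then have d1: "1 \<le> dim W" by simp
    have d2: "2 \<le> dim W"
    proof (rule ccontr)
      assume "\<not> 2 \<le> dim W"
      then have "card {w} = dim W" using d1 by simp
      then have "span {w} = W" using dim_indep_eq[OF sW iw] wW by simp
      then have "w' \<in> span {w}" using w'W by simp
      moreover have "span {w} \<subseteq> x" by (rule span_min) (use w(1) sx in auto)
      ultimately have "w' \<in> x \<inter> y" using w'(1) by blast
      then have "w' \<in> H \<inter> A" using xyH w'(1) by blast
      then show False using HA w'(2) by blast
    qed
    have UW: "U \<inter> W \<subseteq> U \<inter> A" unfolding W_def by blast
    have "dim U + dim W \<le> dim B + dim (U \<inter> W)"
      by (rule grassmann_ineq[OF sU sW sB U(3)]) (simp add: W_def)
    then have "0 < dim (U \<inter> W)" using dU dB d2 by simp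
    moreover have "dim (U \<inter> W) \<le> dim (U \<inter> A)"
      by (rule dim_mono[OF subsp_Int[OF sU sW] subsp_Int[OF sU sA] UW])
    ultimately show ?thesis by simp
  qed
qed

lemma slice_hyp:
  assumes sA: "subsp A" and d: "dim A + m = dim UNIV" and m1: "1 \<le> m"
  shows "hyperplane (grassmann sm m) {U \<in> Sub sm m. 0 < dim (U \<inter> A)}"
proof -
  let ?S = "{U \<in> Sub sm m. 0 < dim (U \<inter> A)}"
  have sub: "pls_subspace (grassmann sm m) ?S"
    unfolding pls_subspace_def grassmann_def fst_conv snd_conv
  proof (intro conjI ballI impI)
    show "?S \<subseteq> Sub sm m" by blast
  next
    fix l assume l: "l \<in> {{U \<in> Sub sm m. H \<subseteq> U \<and> U \<subseteq> B} |H B.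
           H \<in> Sub sm (m - 1) \<and> B \<in> Sub sm (m + 1) \<and> H \<subseteq> B}"
    then obtain H B where HB: "l = {U \<in> Sub sm m. H \<subseteq> U \<and> U \<subseteq> B}" "H \<in> Sub sm (m - 1)"
      "B \<in> Sub sm (m + 1)" "H \<subseteq> B" by blast
    assume "\<exists>x y. x \<noteq> y \<and> x \<in> l \<inter> ?S \<and> y \<in> l \<inter> ?S"
    then obtain x y where xy: "x \<noteq> y" "x \<in> l \<inter> ?S" "y \<in> l \<inter> ?S" by blast
    show "l \<subseteq> ?S"
    proof
      fix U assume "U \<in> l"
      then have U: "U \<in> Sub sm m" "H \<subseteq> U" "U \<subseteq> B" using HB(1) by auto
      have x: "x \<in> Sub sm m" "H \<subseteq> x" "x \<subseteq> B" "0 < dim (x \<inter> A)" using xy(2) HB(1) by auto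
      have y: "y \<in> Sub sm m" "H \<subseteq> y" "y \<subseteq> B" "0 < dim (y \<inter> A)" using xy(3) HB(1) by auto
      have "0 < dim (U \<inter> A)" by (rule line_sub[OF sA m1 HB(2) HB(3) x y xy(1) U])
      then show "U \<in> ?S" using U(1) by simp
    qed
  qed
  have ne: "?S \<noteq> Sub sm m"
  proof -
    obtain U where U: "subsp U" "dim U = m" "U \<inter> A = {0}" using complement[OF sA d] by blast
    have d0: "dim (U \<inter> A) = 0" using U(3) dim_zero[OF subsp_Int[OF U(1) sA]] by simp
    have Uin: "U \<in> Sub sm m" using U unfolding Sub_def by simp
    show ?thesis
    proof
      assume eq: "?S = Sub sm m"
      have "U \<in> ?S" using Uin eq by simp
      then show False using d0 by simp
    qed
  qed
  have meet: "\<forall>l\<in>snd (grassmann sm m). l \<inter> ?S \<noteq> {}"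
    unfolding grassmann_def snd_conv
  proof
    fix l assume l: "l \<in> {{U \<in> Sub sm m. H \<subseteq> U \<and> U \<subseteq> B} |H B.
           H \<in> Sub sm (m - 1) \<and> B \<in> Sub sm (m + 1) \<and> H \<subseteq> B}"
    then obtain H B where HB: "l = {U \<in> Sub sm m. H \<subseteq> U \<and> U \<subseteq> B}" "H \<in> Sub sm (m - 1)"
      "B \<in> Sub sm (m + 1)" "H \<subseteq> B" by blast
    obtain U where "U \<in> Sub sm m" "H \<subseteq> U" "U \<subseteq> B" "0 < dim (U \<inter> A)"
      using line_meets[OF sA d m1 HB(2) HB(3) HB(4)] by blast
    then have "U \<in> l \<inter> ?S" using HB(1) by simp
    then show "l \<inter> ?S \<noteq> {}" by blast
  qed
  show ?thesis unfolding hyperplane_def using sub ne meet by (simp add: grassmann_def)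
qed

end

lemma segre_hyp:
  assumes "H \<subseteq> fst P \<times> fst Q" "H \<noteq> fst P \<times> fst Q"
    and h1: "\<forall>b\<in>fst Q. hyperplane P {x. (x, b) \<in> H}"
    and h2: "\<forall>a\<in>fst P. hyperplane Q {y. (a, y) \<in> H}"
  shows "hyperplane (segre P Q) H"
proof -
  have sub: "pls_subspace (segre P Q) H"
    unfolding pls_subspace_def
  proof (intro conjI ballI impI)
    show "H \<subseteq> fst (segre P Q)" using assms(1) by (simp add: segre_def)
  next
    fix L assume L: "L \<in> snd (segre P Q)"
    assume ex: "\<exists>x y. x \<noteq> y \<and> x \<in> L \<inter> H \<and> y \<in> L \<inter> H"
    then obtain p q where pq: "p \<noteq> q" "p \<in> L \<inter> H" "q \<in> L \<inter> H" by blast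
    from L consider (a) l b where "L = l \<times> {b}" "l \<in> snd P" "b \<in> fst Q"
      | (b) a m where "L = {a} \<times> m" "a \<in> fst P" "m \<in> snd Q"
      unfolding segre_def by auto
    then show "L \<subseteq> H"
    proof cases
      case a
      have hp: "hyperplane P {x. (x, b) \<in> H}" using h1 a(3) by blast
      obtain x where px: "p = (x, b)" "x \<in> l" using pq(2) a(1) by auto
      obtain y where qy: "q = (y, b)" "y \<in> l" using pq(3) a(1) by auto
      have "x \<noteq> y" using pq(1) px qy by auto
      moreover have "x \<in> l \<inter> {x. (x, b) \<in> H}" "y \<in> l \<inter> {x. (x, b) \<in> H}"
        using px qy pq by auto
      ultimately have "l \<subseteq> {x. (x, b) \<in> H}"
        using hp a(2) unfolding hyperplane_def pls_subspace_def by blast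
      then show ?thesis using a(1) by auto
    next
      case b
      have hp: "hyperplane Q {y. (a, y) \<in> H}" using h2 b(2) by blast
      obtain x where px: "p = (a, x)" "x \<in> m" using pq(2) b(1) by auto
      obtain y where qy: "q = (a, y)" "y \<in> m" using pq(3) b(1) by auto
      have "x \<noteq> y" using pq(1) px qy by auto
      moreover have "x \<in> m \<inter> {y. (a, y) \<in> H}" "y \<in> m \<inter> {y. (a, y) \<in> H}"
        using px qy pq by auto
      ultimately have "m \<subseteq> {y. (a, y) \<in> H}"
        using hp b(3) unfolding hyperplane_def pls_subspace_def by blast
      then show ?thesis using b(1) by auto
    qed
  qed
  have meet: "\<forall>L\<in>snd (segre P Q). L \<inter> H \<noteq> {}"
  proof
    fix L assume L: "L \<in> snd (segre P Q)"
    from L consider (a) l b where "L = l \<times> {b}" "l \<in> snd P" "b \<in> fst Q"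
      | (b) a m where "L = {a} \<times> m" "a \<in> fst P" "m \<in> snd Q"
      unfolding segre_def by auto
    then show "L \<inter> H \<noteq> {}"
    proof cases
      case a
      have hp: "hyperplane P {x. (x, b) \<in> H}" using h1 a(3) by blast
      then have "l \<inter> {x. (x, b) \<in> H} \<noteq> {}" using a(2) unfolding hyperplane_def by blast
      then show ?thesis using a(1) by blast
    next
      case b
      have hp: "hyperplane Q {y. (a, y) \<in> H}" using h2 b(2) by blast
      then have "m \<inter> {y. (a, y) \<in> H} \<noteq> {}" using b(3) unfolding hyperplane_def by blast
      then show ?thesis using b(1) by blast
    qed
  qed
  show ?thesis unfolding hyperplane_def using sub meet assms(2) by (simp add: segre_def)
qed




context fdvs begin

lemma exists_sub: assumes "m \<le> dim UNIV" shows "\<exists>U. U \<in> Sub sm m"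
proof -
  obtain B where B: "finite B" "vbasis sm UNIV B" using basis_ex[OF subsp_UNIV] by blast
  have cB: "card B = dim UNIV" using dim_basis[OF B(2) B(1)] by simp
  obtain D where D: "D \<subseteq> B" "card D = m" "finite D" using obtain_subset_with_card_n[of m B] assms cB by auto
  have iD: "indep D" using B(2) D(1) indep_subset unfolding vbasis_def by blast
  have "dim (span D) = m" using dim_span[OF iD D(3)] D(2) by simp
  then have "span D \<in> Sub sm m" unfolding Sub_def using span_subsp by simp
  then show ?thesis by blast
qed

lemma collinear_stays:
  assumes sW: "subsp W" and k1: "1 \<le> k" and U: "U \<in> Sub sm k" and H0: "H0 \<in> Sub sm (k - 1)"
    and H0U: "H0 \<subseteq> U" and sU': "subsp U'" and H0U': "H0 \<subseteq> U'" and d2: "2 \<le> dim (U \<inter> W)"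
  shows "0 < dim (U' \<inter> W)"
proof -
  have sU: "subsp U" and dU: "dim U = k" using U unfolding Sub_def by auto
  have sH: "subsp H0" and dH: "dim H0 = k - 1" using H0 unfolding Sub_def by auto
  have sUW: "subsp (U \<inter> W)" using sU sW by (rule subsp_Int)
  have "dim H0 + dim (U \<inter> W) \<le> dim U + dim (H0 \<inter> (U \<inter> W))"
    by (rule grassmann_ineq[OF sH sUW sU H0U]) blast
  then have "0 < dim (H0 \<inter> (U \<inter> W))" using dU dH d2 k1 by simp
  moreover have "dim (H0 \<inter> (U \<inter> W)) \<le> dim (U' \<inter> W)"
    by (rule dim_mono[OF subsp_Int[OF sH sUW] subsp_Int[OF sU' sW]]) (use H0U' in blast)
  ultimately show ?thesis by simp
qed

end

theorem proposition4p17: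
  fixes sm :: "'k::division_ring \<Rightarrow> 'v::ab_group_add \<Rightarrow> 'v"
    and k1 k2 :: nat
  assumes "vs_axioms sm"
    and "findim sm"
    and "1 < k1" and "k1 < vdim sm UNIV - 1"
    and "k1 + k2 = vdim sm UNIV"
  shows "nondegenerate_hyperplane (grassmann sm k1) (grassmann sm k2)
           {(U1, U2). U1 \<in> Sub sm k1 \<and> U2 \<in> Sub sm k2 \<and> vdim sm (U1 \<inter> U2) > 0}
       \<and> \<not> spiky (segre (grassmann sm k1) (grassmann sm k2))
           {(U1, U2). U1 \<in> Sub sm k1 \<and> U2 \<in> Sub sm k2 \<and> vdim sm (U1 \<inter> U2) > 0}"
proof -
  interpret fdvs sm by (simp add: fdvs_def fdvs_axioms_def vs_def assms(1,2))
  define n where "n = vdim sm UNIV"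
  define HS where "HS = {(U1, U2). U1 \<in> Sub sm k1 \<and> U2 \<in> Sub sm k2 \<and> vdim sm (U1 \<inter> U2) > 0}"
  have k1g: "2 \<le> k1" using assms(3) by simp
  have k2g: "2 \<le> k2" using assms(4,5) unfolding n_def[symmetric] by simp
  have fP: "fst (grassmann sm k1) = Sub sm k1" by (simp add: grassmann_def)
  have fQ: "fst (grassmann sm k2) = Sub sm k2" by (simp add: grassmann_def)
  have sl1: "{x. (x, b) \<in> HS} = {U \<in> Sub sm k1. 0 < dim (U \<inter> b)}" if "b \<in> Sub sm k2" for b
    using that unfolding HS_def by auto
  have sl2: "{y. (a, y) \<in> HS} = {U \<in> Sub sm k2. 0 < dim (U \<inter> a)}" if "a \<in> Sub sm k1" for a
    using that unfolding HS_def by (auto simp: Int_commute)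
  have hyp1: "hyperplane (grassmann sm k1) {x. (x, b) \<in> HS}" if b: "b \<in> Sub sm k2" for b
  proof -
    have "subsp b" "dim b = k2" using b unfolding Sub_def by auto
    then have "hyperplane (grassmann sm k1) {U \<in> Sub sm k1. 0 < dim (U \<inter> b)}"
      using slice_hyp[of b k1] assms(5) k1g by simp
    then show ?thesis using sl1[OF b] by simp
  qed
  have hyp2: "hyperplane (grassmann sm k2) {y. (a, y) \<in> HS}" if a: "a \<in> Sub sm k1" for a
  proof -
    have "subsp a" "dim a = k1" using a unfolding Sub_def by auto
    then have "hyperplane (grassmann sm k2) {U \<in> Sub sm k2. 0 < dim (U \<inter> a)}"
      using slice_hyp[of a k2] assms(5) k2g by simp
    then show ?thesis using sl2[OF a] by simp
  qed
  have HSsub: "HS \<subseteq> fst (grassmann sm k1) \<times> fst (grassmann sm k2)"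
    unfolding fP fQ HS_def by auto
  have HSne: "HS \<noteq> fst (grassmann sm k1) \<times> fst (grassmann sm k2)"
  proof -
    obtain U2 where U2: "U2 \<in> Sub sm k2" using exists_sub[of k2] assms(5) by auto
    have sU2: "subsp U2" "dim U2 = k2" using U2 unfolding Sub_def by auto
    obtain U1 where U1: "subsp U1" "dim U1 = k1" "U1 \<inter> U2 = {0}"
      using complement[OF sU2(1), of k1] sU2(2) assms(5) by auto
    have "dim (U1 \<inter> U2) = 0" using U1(3) dim_zero[OF subsp_Int[OF U1(1) sU2(1)]] by simp
    then have "(U1, U2) \<notin> HS" unfolding HS_def by simp
    moreover have "(U1, U2) \<in> fst (grassmann sm k1) \<times> fst (grassmann sm k2)"
      unfolding fP fQ using U1 U2 unfolding Sub_def by simp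
    ultimately show ?thesis by blast
  qed
  have hypS: "hyperplane (segre (grassmann sm k1) (grassmann sm k2)) HS"
    by (rule segre_hyp[OF HSsub HSne]) (simp_all add: fP fQ hyp1 hyp2)
  have nd: "nondegenerate_hyperplane (grassmann sm k1) (grassmann sm k2) HS"
    unfolding nondegenerate_hyperplane_def
  proof (intro conjI ballI)
    show "hyperplane (segre (grassmann sm k1) (grassmann sm k2)) HS" by (rule hypS)
  next
    fix a assume a: "a \<in> fst (grassmann sm k1) \<times> fst (grassmann sm k2)"
    then have "snd a \<in> Sub sm k2" unfolding fQ by auto
    then show "hyperplane (grassmann sm k1) (slice1 HS a)" unfolding slice1_def by (rule hyp1)
  next
    fix a assume a: "a \<in> fst (grassmann sm k1) \<times> fst (grassmann sm k2)"
    then have "fst a \<in> Sub sm k1" unfolding fP by auto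
    then show "hyperplane (grassmann sm k2) (slice2 HS a)" unfolding slice2_def by (rule hyp2)
  qed
  have ns: "\<not> spiky (segre (grassmann sm k1) (grassmann sm k2)) HS"
  proof -
    obtain B where B: "finite B" "vbasis sm UNIV B" using basis_ex[OF subsp_UNIV] by blast
    have cB: "card B = n" using dim_basis[OF B(2) B(1)] n_def by simp
    have iB: "indep B" using B(2) unfolding vbasis_def by simp
    obtain C where C: "C \<subseteq> B" "card C = k1" "finite C"
      using obtain_subset_with_card_n[of k1 B] assms(5) cB n_def by auto
    obtain P2 where P2: "P2 \<subseteq> C" "card P2 = 2" "finite P2"
      using obtain_subset_with_card_n[of 2 C] C(2) k1g by auto
    have cBC: "card (B - C) = k2" using card_Diff_subset[OF C(3) C(1)] cB C(2) assms(5) n_def by simp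
    obtain D where D: "D \<subseteq> B - C" "card D = k2 - 2" "finite D"
      using obtain_subset_with_card_n[of "k2 - 2" "B - C"] cBC by auto
    define U1 where "U1 = span C"
    define U2 where "U2 = span (P2 \<union> D)"
    have iC: "indep C" using indep_subset[OF iB C(1)] .
    have "P2 \<union> D \<subseteq> B" using P2(1) C(1) D(1) by blast
    then have iPD: "indep (P2 \<union> D)" by (rule indep_subset[OF iB])
    have djPD: "P2 \<inter> D = {}" using P2(1) D(1) by blast
    have "card (P2 \<union> D) = k2" using card_Un_disjoint[OF P2(3) D(3) djPD] P2(2) D(2) k2g by simp
    then have dU2: "dim U2 = k2" unfolding U2_def using dim_span[OF iPD] P2(3) D(3) by simp
    have dU1: "dim U1 = k1" unfolding U1_def using dim_span[OF iC C(3)] C(2) by simp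
    have U1S: "U1 \<in> Sub sm k1" unfolding Sub_def using dU1 span_subsp U1_def by simp
    have U2S: "U2 \<in> Sub sm k2" unfolding Sub_def using dU2 span_subsp U2_def by simp
    have sU1: "subsp U1" and sU2: "subsp U2" unfolding U1_def U2_def by (rule span_subsp)+
    have "P2 \<subseteq> U1" unfolding U1_def using P2(1) span_sup[of C] by (rule order_trans)
    moreover have "P2 \<subseteq> U2" unfolding U2_def by (rule order_trans[OF Un_upper1 span_sup])
    ultimately have "P2 \<subseteq> U1 \<inter> U2" by blast
    then have d2: "2 \<le> dim (U1 \<inter> U2)"
    proof -
      have iP2: "indep P2" by (rule indep_subset[OF iPD Un_upper1])
      have "card P2 \<le> dim (U1 \<inter> U2)" using dim_indep_le[OF subsp_Int[OF sU1 sU2] iP2 \<open>P2 \<subseteq> U1 \<inter> U2\<close>] by simp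
      then show ?thesis using P2(2) by simp
    qed
    have d2': "2 \<le> dim (U2 \<inter> U1)" using d2 by (simp add: Int_commute)
    have inHS: "(U1, U2) \<in> HS" unfolding HS_def using U1S U2S d2 by simp
    have allin: "y \<in> HS" if col: "collinear_pts (segre (grassmann sm k1) (grassmann sm k2)) (U1, U2) y" for y
    proof -
      obtain L where L: "L \<in> snd (segre (grassmann sm k1) (grassmann sm k2))" "(U1, U2) \<in> L" "y \<in> L"
        using col unfolding collinear_pts_def by blast
      from L(1) consider (a) l b where "L = l \<times> {b}" "l \<in> snd (grassmann sm k1)" "b \<in> Sub sm k2"
        | (b) a m where "L = {a} \<times> m" "a \<in> Sub sm k1" "m \<in> snd (grassmann sm k2)"
        unfolding segre_def fP fQ by auto
      then show ?thesis
      proof cases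
        case a
        obtain H0 B0 where l: "l = {U \<in> Sub sm k1. H0 \<subseteq> U \<and> U \<subseteq> B0}" "H0 \<in> Sub sm (k1 - 1)"
          using a(2) unfolding grassmann_def by auto
        obtain y1 where y: "y = (y1, U2)" "y1 \<in> l" using L(2,3) a(1) by auto
        have "U1 \<in> l" using L(2) a(1) by auto
        then have H0U1: "H0 \<subseteq> U1" using l(1) by simp
        have y1: "y1 \<in> Sub sm k1" "H0 \<subseteq> y1" using y(2) l(1) by auto
        have sy1: "subsp y1" using y1(1) unfolding Sub_def by simp
        have "0 < dim (y1 \<inter> U2)"
          by (rule collinear_stays[OF sU2 _ U1S l(2) H0U1 sy1 y1(2) d2]) (use k1g in simp)
        then show ?thesis using y(1) y1(1) U2S unfolding HS_def by simp
      next
        case b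
        obtain H0 B0 where m: "m = {U \<in> Sub sm k2. H0 \<subseteq> U \<and> U \<subseteq> B0}" "H0 \<in> Sub sm (k2 - 1)"
          using b(3) unfolding grassmann_def by auto
        obtain y2 where y: "y = (U1, y2)" "y2 \<in> m" using L(2,3) b(1) by auto
        have "U2 \<in> m" using L(2) b(1) by auto
        then have H0U2: "H0 \<subseteq> U2" using m(1) by simp
        have y2: "y2 \<in> Sub sm k2" "H0 \<subseteq> y2" using y(2) m(1) by auto
        have sy2: "subsp y2" using y2(1) unfolding Sub_def by simp
        have "0 < dim (y2 \<inter> U1)"
          by (rule collinear_stays[OF sU1 _ U2S m(2) H0U2 sy2 y2(2) d2']) (use k2g in simp)
        then show ?thesis using y(1) y2(1) U1S unfolding HS_def by (simp add: Int_commute)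
      qed
    qed
    show ?thesis unfolding spiky_def using inHS allin by blast
  qed
  show ?thesis using nd ns unfolding HS_def by (rule conjI)
qed


end
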